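(* Let $s=(\ell,\nu)\in S$, let $(\ell,\zeta)$ be a region with $(\ell,[\nu])\to_*(\ell,\zeta)$, let $a\in\mathit{Act}$, and let $F:\hat S\to\mathbb{R}$ be regionally quasi-simple. Then the function $F^\oplus_{s,\zeta,a}:I\to\mathbb{R}$, where $I=\{t\in\mathbb{R}_{\ge0}:\nu+t\in\zeta\}$, defined by $$F^\oplus_{s,\zeta,a}(t)=t+\sum_{(C,\ell')\in 2^{\mathcal{C}}\times L}\delta[\ell,a](C,\ell')\cdot F\big((\ell',(\nu+t)[C:=0]),(\ell',\zeta[C:=0])\big),$$ is continuous and nondecreasing.
   Context: Fix $k\in\mathbb{N}$ and a finite set of clocks $\mathcal{C}$; $V$ is the set of $\nu:\mathcal{C}\to[0,k]$; $\nu+t$ adds $t$ to every clock; $\nu[C:=0]$ resets the clocks in $C\subseteq\mathcal{C}$; $\|x\|_\infty=\max_i|x_i|$; $\overline{X}$ is the closure of $X$. A clock region is a maximal set of valuations satisfying exactly the same constraints $c\bowtie i$, $c-c'\bowtie i$ ($c,c'\in\mathcal{C}$, $i\in\{0,\dots,k\}$, $\bowtie\in\{<,>,=,\le,\ge\}$); $[\nu]$ is the region of $\nu$; $\zeta[C:=0]=[\nu[C:=0]]$ for $\nu\in\zeta$. Clock zones are convex unions of clock regions. A PTA is $\mathsf{T}=(L,L_F,\mathcal{C},\mathit{Inv},\mathit{Act},E,\delta)$ with finite locations $L$, final locations $L_F$, invariants $\mathit{Inv}:L\to$ clock zones, finite actions $\mathit{Act}$, enabledness $E:L\times\mathit{Act}\to$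 clock zones and $\delta:L\times\mathit{Act}\to\mathrm{Dist}(2^{\mathcal{C}}\times L)$. Its states are $S=\{(\ell,\nu):\nu\in\mathit{Inv}(\ell)\}$. A region is $(\ell,\zeta)$ with $\zeta\subseteq\mathit{Inv}(\ell)$ a clock region; $R\to_*R'$ iff some $(\ell,\nu)\in R$ and $t\ge0$ satisfy $(\ell,\nu+t)\in R'$. The boundary-region-graph state space is $\hat S=\{((\ell,\nu),(\ell,\zeta)):(\ell,\zeta)\text{ a region},\ \nu\in\overline{\zeta}\}$. For $\nu,\nu'\in V$, $\nu\unlhd\nu'$ iff there is $t\ge0$ such that for every clock $c$, $\nu'(c)-\nu(c)=t$ or $\nu'(c)=\nu(c)$, with $\nu'(c)-\nu(c)=t$ for at least one $c$; then $\nu'-\nu:=t$. $f:X\to\mathbb{R}$ is quasi-simple if it is Lipschitz w.r.t. $\|\cdot\|_\infty$ and whenever $\nu\unlhd\nu'$ in $X$, $f(\nu)\ge f(\nu')$ and $f(\nu)-f(\nu')\le\nu'-\nu$. $F:\hat S\to\mathbb{R}$ is regionally quasi-simple if for every region $(\ell,\zeta)$, $\nu\mapsto F((\ell,\nu),(\ell,\zeta))$ on $\overline{\zeta}$ is quasi-simple. *)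

theory Defs
  imports "HOL-Analysis.Analysis" "HOL-Probability.Probability_Mass_Function"
begin

text \<open>Clocks are the elements of a finite type 'c (the whole set of clocks is UNIV).
  A valuation is a function 'c \<Rightarrow> real.  The bound k is a natural number.\<close>

type_synonym 'c valuation = "'c \<Rightarrow> real"

definition Vals :: "nat \<Rightarrow> 'c valuation set" where
  "Vals k = {\<nu>. \<forall>c. 0 \<le> \<nu> c \<and> \<nu> c \<le> real k}"

definition delay :: "'c valuation \<Rightarrow> real \<Rightarrow> 'c valuation" where
  "delay \<nu> t = (\<lambda>c. \<nu> c + t)"

definition reset :: "'c valuation \<Rightarrow> 'c set \<Rightarrow> 'c valuation" where
  "reset \<nu> C = (\<lambda>c. if c \<in> C then 0 else \<nu> c)"

definition norm_inf :: "('c::finite) valuation \<Rightarrow> real" where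
  "norm_inf x = Max (range (\<lambda>c. \<bar>x c\<bar>))"

datatype cmp = Lt | Le | Eq | Ge | Gt

fun cmp_sem :: "cmp \<Rightarrow> real \<Rightarrow> real \<Rightarrow> bool" where
  "cmp_sem Lt x y = (x < y)"
| "cmp_sem Le x y = (x \<le> y)"
| "cmp_sem Eq x y = (x = y)"
| "cmp_sem Ge x y = (x \<ge> y)"
| "cmp_sem Gt x y = (x > y)"

datatype 'c constr = Single 'c cmp nat | Diff 'c 'c cmp nat

fun sat :: "'c valuation \<Rightarrow> 'c constr \<Rightarrow> bool" where
  "sat \<nu> (Single c r i) = cmp_sem r (\<nu> c) (real i)"
| "sat \<nu> (Diff c c' r i) = cmp_sem r (\<nu> c - \<nu> c') (real i)"

fun bound :: "'c constr \<Rightarrow> nat" where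
  "bound (Single c r i) = i"
| "bound (Diff c c' r i) = i"

definition constrs :: "nat \<Rightarrow> 'c constr set" where
  "constrs k = {\<phi>. bound \<phi> \<le> k}"

definition region_of :: "nat \<Rightarrow> 'c valuation \<Rightarrow> 'c valuation set" where
  "region_of k \<nu> = {\<nu>' \<in> Vals k. \<forall>\<phi> \<in> constrs k. sat \<nu> \<phi> = sat \<nu>' \<phi>}"

definition clock_region :: "nat \<Rightarrow> 'c valuation set \<Rightarrow> bool" where
  "clock_region k \<zeta> \<longleftrightarrow> (\<exists>\<nu> \<in> Vals k. \<zeta> = region_of k \<nu>)"

definition reset_region :: "nat \<Rightarrow> 'c valuation set \<Rightarrow> 'c set \<Rightarrow> 'c valuation set" where
  "reset_region k \<zeta> C = region_of k (reset (SOME \<nu>. \<nu> \<in> \<zeta>) C)"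

definition clock_zone :: "nat \<Rightarrow> 'c valuation set \<Rightarrow> bool" where
  "clock_zone k Z \<longleftrightarrow>
     (\<exists>\<R>. (\<forall>\<zeta> \<in> \<R>. clock_region k \<zeta>) \<and> Z = \<Union>\<R>) \<and>
     (\<forall>x \<in> Z. \<forall>y \<in> Z. \<forall>u::real. 0 \<le> u \<and> u \<le> 1 \<longrightarrow>
        (\<lambda>c. u * x c + (1 - u) * y c) \<in> Z)"

definition pta :: "nat \<Rightarrow> 'l set \<Rightarrow> 'l set \<Rightarrow> ('l \<Rightarrow> ('c::finite) valuation set) \<Rightarrow> 'a set
    \<Rightarrow> ('l \<Rightarrow> 'a \<Rightarrow> 'c valuation set) \<Rightarrow> ('l \<Rightarrow> 'a \<Rightarrow> ('c set \<times> 'l) pmf) \<Rightarrow> bool" where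
  "pta k L LF Inv Act E \<delta> \<longleftrightarrow>
     finite L \<and> LF \<subseteq> L \<and> finite Act \<and>
     (\<forall>l \<in> L. clock_zone k (Inv l)) \<and>
     (\<forall>l \<in> L. \<forall>a \<in> Act. clock_zone k (E l a)) \<and>
     (\<forall>l \<in> L. \<forall>a \<in> Act. set_pmf (\<delta> l a) \<subseteq> Pow UNIV \<times> L)"

definition states :: "'l set \<Rightarrow> ('l \<Rightarrow> 'c valuation set) \<Rightarrow> ('l \<times> 'c valuation) set" where
  "states L Inv = {(l, \<nu>). l \<in> L \<and> \<nu> \<in> Inv l}"

definition is_region :: "nat \<Rightarrow> 'l set \<Rightarrow> ('l \<Rightarrow> 'c valuation set) \<Rightarrow> 'l \<Rightarrow> 'c valuation set \<Rightarrow> bool" where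
  "is_region k L Inv l \<zeta> \<longleftrightarrow> l \<in> L \<and> clock_region k \<zeta> \<and> \<zeta> \<subseteq> Inv l"

definition reaches :: "('l \<times> 'c valuation set) \<Rightarrow> ('l \<times> 'c valuation set) \<Rightarrow> bool" where
  "reaches R R' \<longleftrightarrow> (\<exists>\<nu> \<in> snd R. \<exists>t \<ge> 0. fst R' = fst R \<and> delay \<nu> t \<in> snd R')"

definition succ_by :: "'c valuation \<Rightarrow> 'c valuation \<Rightarrow> real \<Rightarrow> bool" where
  "succ_by \<nu> \<nu>' t \<longleftrightarrow> t \<ge> 0 \<and> (\<forall>c. \<nu>' c - \<nu> c = t \<or> \<nu>' c = \<nu> c) \<and> (\<exists>c. \<nu>' c - \<nu> c = t)"

definition lipschitz_inf :: "('c::finite) valuation set \<Rightarrow> ('c valuation \<Rightarrow> real) \<Rightarrow> bool" where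
  "lipschitz_inf X f \<longleftrightarrow> (\<exists>K. \<forall>x \<in> X. \<forall>y \<in> X. \<bar>f x - f y\<bar> \<le> K * norm_inf (\<lambda>c. x c - y c))"

definition quasi_simple :: "('c::finite) valuation set \<Rightarrow> ('c valuation \<Rightarrow> real) \<Rightarrow> bool" where
  "quasi_simple X f \<longleftrightarrow> lipschitz_inf X f \<and>
     (\<forall>\<nu> \<in> X. \<forall>\<nu>' \<in> X. \<forall>t. succ_by \<nu> \<nu>' t \<longrightarrow> f \<nu> \<ge> f \<nu>' \<and> f \<nu> - f \<nu>' \<le> t)"

text \<open>F : \<hat>S \<rightarrow> \<real> is represented by a total function; only its values on \<hat>S matter.\<close>

definition regionally_quasi_simple :: "nat \<Rightarrow> 'l set \<Rightarrow> ('l \<Rightarrow> ('c::finite) valuation set)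
    \<Rightarrow> (('l \<times> 'c valuation) \<times> ('l \<times> 'c valuation set) \<Rightarrow> real) \<Rightarrow> bool" where
  "regionally_quasi_simple k L Inv F \<longleftrightarrow>
     (\<forall>l \<zeta>. is_region k L Inv l \<zeta> \<longrightarrow>
        quasi_simple (closure \<zeta>) (\<lambda>\<nu>. F ((l, \<nu>), (l, \<zeta>))))"

definition F_oplus :: "nat \<Rightarrow> 'l set \<Rightarrow> ('l \<Rightarrow> 'a \<Rightarrow> ('c set \<times> 'l) pmf)
    \<Rightarrow> (('l \<times> 'c valuation) \<times> ('l \<times> 'c valuation set) \<Rightarrow> real)
    \<Rightarrow> 'l \<Rightarrow> 'c valuation \<Rightarrow> 'c valuation set \<Rightarrow> 'a \<Rightarrow> real \<Rightarrow> real" where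
  "F_oplus k L \<delta> F l \<nu> \<zeta> a t =
     t + (\<Sum>(C, l') \<in> Pow UNIV \<times> L.
            pmf (\<delta> l a) (C, l') * F ((l', reset (delay \<nu> t) C), (l', reset_region k \<zeta> C)))"

end

theory Submission imports Defs begin

lemma cmp_neg:
  assumes "(u::real) \<ge> 0" "v \<ge> 0" "\<forall>r'. cmp_sem r' u 0 = cmp_sem r' v 0"
  shows "cmp_sem r (-u) (real i) = cmp_sem r (-v) (real i)"
proof (cases "i = 0")
  case True
  then show ?thesis using assms(3)[rule_format, of Lt] assms(3)[rule_format, of Le]
      assms(3)[rule_format, of Eq] assms(3)[rule_format, of Ge] assms(3)[rule_format, of Gt]
    by (cases r) auto
next
  case False
  then have "real i > 0" by simp
  then show ?thesis using assms(1,2) by (cases r) auto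
qed

lemma reset_same_region:
  assumes "clock_region k \<zeta>" "x \<in> \<zeta>" "y \<in> \<zeta>"
  shows "reset x C \<in> region_of k (reset y C)"
proof -
  obtain w where w: "\<zeta> = region_of k w" using assms(1) unfolding clock_region_def by blast
  have xV: "x \<in> Vals k" and yV: "y \<in> Vals k" using assms(2,3) w unfolding region_of_def by auto
  have eq: "\<And>\<phi>. \<phi> \<in> constrs k \<Longrightarrow> sat x \<phi> = sat y \<phi>"
    using assms(2,3) w unfolding region_of_def by auto
  have "reset x C \<in> Vals k" using xV unfolding Vals_def reset_def by auto
  moreover have "sat (reset y C) \<phi> = sat (reset x C) \<phi>" if "\<phi> \<in> constrs k" for \<phi>
  proof (cases \<phi>)
    case (Single c r i)
    then show ?thesis using eq[of \<phi>] that by (auto simp: reset_def)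
  next
    case (Diff c c' r i)
    have bi: "i \<le> k" using that Diff by (simp add: constrs_def)
    show ?thesis
    proof (cases "c \<in> C")
      case True
      show ?thesis
      proof (cases "c' \<in> C")
        case True
        then show ?thesis using \<open>c \<in> C\<close> Diff by (simp add: reset_def)
      next
        case False
        have "\<forall>r'. cmp_sem r' (x c') 0 = cmp_sem r' (y c') 0"
        proof
          fix r'
          have "Single c' r' 0 \<in> constrs k" by (simp add: constrs_def)
          from eq[OF this] show "cmp_sem r' (x c') 0 = cmp_sem r' (y c') 0" by simp
        qed
        moreover have "x c' \<ge> 0" "y c' \<ge> 0" using xV yV unfolding Vals_def by auto
        ultimately show ?thesis using True False Diff cmp_neg[of "x c'" "y c'" r i]
          by (simp add: reset_def)
      qed
    next
      case False
      show ?thesis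
      proof (cases "c' \<in> C")
        case True
        have "Single c r i \<in> constrs k" using bi by (simp add: constrs_def)
        from eq[OF this] show ?thesis using True False Diff by (simp add: reset_def)
      next
        case False
        then show ?thesis using \<open>c \<notin> C\<close> Diff eq[of \<phi>] that by (simp add: reset_def)
      qed
    qed
  qed
  ultimately show ?thesis unfolding region_of_def by auto
qed

lemma norm_inf_reset_diff:
  fixes x :: "('c::finite) valuation"
  shows "norm_inf (\<lambda>c. reset (delay x s) C c - reset (delay x t) C c) \<le> \<bar>s - t\<bar>"
    "norm_inf (\<lambda>c. reset (delay x s) C c - reset (delay x t) C c) \<ge> 0"
proof -
  let ?g = "\<lambda>c. \<bar>reset (delay x s) C c - reset (delay x t) C c\<bar>"
  have fin: "finite (range ?g)" by simp
  show "norm_inf (\<lambda>c. reset (delay x s) C c - reset (delay x t) C c) \<le> \<bar>s - t\<bar>"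
    unfolding norm_inf_def using fin
    by (subst Max_le_iff) (auto simp: reset_def delay_def)
  obtain c :: 'c where True by simp
  have "?g c \<le> Max (range ?g)" using fin by (intro Max_ge) auto
  then show "norm_inf (\<lambda>c. reset (delay x s) C c - reset (delay x t) C c) \<ge> 0"
    unfolding norm_inf_def by (meson abs_ge_zero order_trans)
qed

theorem lemma3:
  fixes k :: nat
    and L LF :: "'l set" and Inv :: "'l \<Rightarrow> ('c::finite) valuation set" and Act :: "'a set"
    and E :: "'l \<Rightarrow> 'a \<Rightarrow> 'c valuation set" and \<delta> :: "'l \<Rightarrow> 'a \<Rightarrow> ('c set \<times> 'l) pmf"
    and F :: "('l \<times> 'c valuation) \<times> ('l \<times> 'c valuation set) \<Rightarrow> real"
    and l :: 'l and \<nu> :: "'c valuation" and \<zeta> :: "'c valuation set" and a :: 'a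
  assumes "pta k L LF Inv Act E \<delta>"
    and "(l, \<nu>) \<in> states L Inv"
    and "is_region k L Inv l \<zeta>"
    and "reaches (l, region_of k \<nu>) (l, \<zeta>)"
    and "a \<in> Act"
    and "regionally_quasi_simple k L Inv F"
    and "\<forall>C l'. (C, l') \<in> set_pmf (\<delta> l a) \<longrightarrow> is_region k L Inv l' (reset_region k \<zeta> C)"
  shows "continuous_on {t. t \<ge> 0 \<and> delay \<nu> t \<in> \<zeta>} (F_oplus k L \<delta> F l \<nu> \<zeta> a)
       \<and> mono_on {t. t \<ge> 0 \<and> delay \<nu> t \<in> \<zeta>} (F_oplus k L \<delta> F l \<nu> \<zeta> a)"
proof -
  define I where "I = {t. t \<ge> 0 \<and> delay \<nu> t \<in> \<zeta>}"
  define S where "S = Pow (UNIV::'c set) \<times> L"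
  define G where "G = (\<lambda>C l' t. F ((l', reset (delay \<nu> t) C), (l', reset_region k \<zeta> C)))"
  have finS: "finite S" using assms(1) unfolding S_def pta_def by auto
  have Fo: "F_oplus k L \<delta> F l \<nu> \<zeta> a = (\<lambda>t. t + (\<Sum>p\<in>S. pmf (\<delta> l a) p * G (fst p) (snd p) t))"
    unfolding F_oplus_def S_def G_def by (auto simp: case_prod_beta)
  have cr: "clock_region k \<zeta>" using assms(3) unfolding is_region_def by auto
  have mem: "reset (delay \<nu> t) C \<in> closure (reset_region k \<zeta> C)" if "t \<in> I" for t C
  proof -
    have t: "delay \<nu> t \<in> \<zeta>" using that I_def by auto
    then have "(SOME \<mu>. \<mu> \<in> \<zeta>) \<in> \<zeta>" by (rule someI[where P="\<lambda>\<mu>. \<mu> \<in> \<zeta>"])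
    from reset_same_region[OF cr t this]
    show ?thesis unfolding reset_region_def using closure_subset by blast
  qed
  have QS: "quasi_simple (closure (reset_region k \<zeta> C)) (\<lambda>x. F ((l', x), (l', reset_region k \<zeta> C)))"
    if "(C, l') \<in> set_pmf (\<delta> l a)" for C l'
    using assms(6,7) that unfolding regionally_quasi_simple_def by blast
  have cont_term: "continuous_on I (\<lambda>t. pmf (\<delta> l a) p * G (fst p) (snd p) t)" for p
  proof (cases "p \<in> set_pmf (\<delta> l a)")
    case False
    then have "pmf (\<delta> l a) p = 0" by (simp add: set_pmf_iff)
    then show ?thesis by simp
  next
    case True
    obtain C l' where p: "p = (C, l')" by force
    from QS[of C l'] True p obtain K where K:
      "\<forall>x \<in> closure (reset_region k \<zeta> C). \<forall>y \<in> closure (reset_region k \<zeta> C).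
        \<bar>F ((l', x), (l', reset_region k \<zeta> C)) - F ((l', y), (l', reset_region k \<zeta> C))\<bar>
         \<le> K * norm_inf (\<lambda>c. x c - y c)"
      unfolding quasi_simple_def lipschitz_inf_def by blast
    have "\<bar>K\<bar>-lipschitz_on I (G C l')"
    proof (rule lipschitz_onI)
      fix s t assume st: "s \<in> I" "t \<in> I"
      have "\<bar>G C l' s - G C l' t\<bar> \<le> K * norm_inf (\<lambda>c. reset (delay \<nu> s) C c - reset (delay \<nu> t) C c)"
        using K[rule_format, OF mem[OF st(1)] mem[OF st(2)]] unfolding G_def by simp
      also have "\<dots> \<le> \<bar>K\<bar> * norm_inf (\<lambda>c. reset (delay \<nu> s) C c - reset (delay \<nu> t) C c)"
        using norm_inf_reset_diff(2)[of \<nu> s C t] by (intro mult_right_mono) auto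
      also have "\<dots> \<le> \<bar>K\<bar> * \<bar>s - t\<bar>"
        using norm_inf_reset_diff(1)[of \<nu> s C t] by (intro mult_left_mono) auto
      finally show "dist (G C l' s) (G C l' t) \<le> \<bar>K\<bar> * dist s t" by (simp add: dist_real_def)
    qed auto
    then have "continuous_on I (G C l')" by (rule lipschitz_on_continuous_on)
    from continuous_on_mult_left[OF this, of "pmf (\<delta> l a) p"]
    show ?thesis using p by simp
  qed
  have cont: "continuous_on I (F_oplus k L \<delta> F l \<nu> \<zeta> a)"
    unfolding Fo by (intro continuous_intros cont_term)
  have term_mono: "pmf (\<delta> l a) p * G (fst p) (snd p) s - pmf (\<delta> l a) p * G (fst p) (snd p) t
      \<le> pmf (\<delta> l a) p * (t - s)" if st: "s \<in> I" "t \<in> I" "s \<le> t" for p s t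
  proof (cases "p \<in> set_pmf (\<delta> l a)")
    case False
    then have "pmf (\<delta> l a) p = 0" by (simp add: set_pmf_iff)
    then show ?thesis by simp
  next
    case True
    obtain C l' where p: "p = (C, l')" by force
    have "G C l' s - G C l' t \<le> t - s"
    proof (cases "C = UNIV")
      case True
      then have "reset (delay \<nu> s) C = reset (delay \<nu> t) C" by (auto simp: reset_def)
      then show ?thesis using st unfolding G_def by simp
    next
      case False
      then obtain c0 where c0: "c0 \<notin> C" by auto
      have sb: "succ_by (reset (delay \<nu> s) C) (reset (delay \<nu> t) C) (t - s)"
        unfolding succ_by_def
      proof (intro conjI allI exI)
        show "0 \<le> t - s" using st(3) by simp
        fix c show "reset (delay \<nu> t) C c - reset (delay \<nu> s) C c = t - s \<or>
          reset (delay \<nu> t) C c = reset (delay \<nu> s) C c" by (simp add: reset_def delay_def)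
      next
        show "reset (delay \<nu> t) C c0 - reset (delay \<nu> s) C c0 = t - s"
          using c0 by (simp add: reset_def delay_def)
      qed
      from QS[of C l'] True p have
        "\<forall>x \<in> closure (reset_region k \<zeta> C). \<forall>y \<in> closure (reset_region k \<zeta> C). \<forall>d. succ_by x y d \<longrightarrow>
          F ((l', x), (l', reset_region k \<zeta> C)) - F ((l', y), (l', reset_region k \<zeta> C)) \<le> d"
        unfolding quasi_simple_def by blast
      from this[rule_format, OF mem[OF st(1)] mem[OF st(2)] sb]
      show ?thesis unfolding G_def by simp
    qed
    then have "pmf (\<delta> l a) p * (G C l' s - G C l' t) \<le> pmf (\<delta> l a) p * (t - s)"
      by (rule mult_left_mono) simp
    then show ?thesis using p by (simp add: right_diff_distrib)
  qed
  have psum: "(\<Sum>p\<in>S. pmf (\<delta> l a) p) \<le> 1"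
    using measure_measure_pmf_finite[OF finS, of "\<delta> l a"] measure_pmf.prob_le_1 by metis
  have "mono_on I (F_oplus k L \<delta> F l \<nu> \<zeta> a)"
  proof (rule mono_onI)
    fix s t assume st: "s \<in> I" "t \<in> I" "s \<le> t"
    have "(\<Sum>p\<in>S. pmf (\<delta> l a) p * G (fst p) (snd p) s) - (\<Sum>p\<in>S. pmf (\<delta> l a) p * G (fst p) (snd p) t)
        = (\<Sum>p\<in>S. pmf (\<delta> l a) p * G (fst p) (snd p) s - pmf (\<delta> l a) p * G (fst p) (snd p) t)"
      by (simp add: sum_subtractf)
    also have "\<dots> \<le> (\<Sum>p\<in>S. pmf (\<delta> l a) p * (t - s))"
      by (intro sum_mono term_mono st)
    also have "\<dots> = (\<Sum>p\<in>S. pmf (\<delta> l a) p) * (t - s)" by (simp add: sum_distrib_right)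
    also have "\<dots> \<le> t - s" using psum st(3) by (intro mult_left_le_one_le) (auto intro: sum_nonneg)
    finally show "F_oplus k L \<delta> F l \<nu> \<zeta> a s \<le> F_oplus k L \<delta> F l \<nu> \<zeta> a t"
      unfolding Fo by simp
  qed
  then show ?thesis using cont unfolding I_def by simp
qed

end
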